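(* Let $H=\langle a,b \mid c=[b,a],\ [c,a]=[c,b]=1\rangle$. Let $f\colon H\to\mathbb{R}$ be a pseudo-Jensen function with $f(a)=f(b)=f(c)=0$. Then $f\equiv 0$.
   Context: $[x,y]=x^{-1}y^{-1}xy$. In $H$ every element is uniquely of the form $a^mb^nc^k$ with $m,n,k\in\mathbb{Z}$ ($H\cong UT(3,\mathbb{Z})$). A function $f\colon H\to\mathbb{R}$ is pseudo-Jensen if there is $\delta>0$ with $|f(xy)+f(xy^{-1})-2f(x)|\le\delta$ for all $x,y\in H$ and $f(x^n)=nf(x)$ for all $x\in H$, $n\in\mathbb{Z}$. *)

theory Defs
  imports Complex_Main
begin

text \<open>The discrete Heisenberg group H, elements written uniquely as a^m b^n c^k,
  encoded as the triple (m, n, k). With c = [b,a] = b^-1 a^-1 b a central we have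
  b a = a b c, hence b^n a^m' = a^m' b^n c^(n m'), giving the product below.\<close>

type_synonym heis = "int \<times> int \<times> int"

definition hmul :: "heis \<Rightarrow> heis \<Rightarrow> heis" where
  "hmul x y = (case x of (m, n, k) \<Rightarrow> case y of (m', n', k') \<Rightarrow>
      (m + m', n + n', k + k' + n * m'))"

definition hone :: heis where "hone = (0, 0, 0)"

definition hinv :: "heis \<Rightarrow> heis" where
  "hinv x = (case x of (m, n, k) \<Rightarrow> (- m, - n, - k + n * m))"

definition hpow :: "heis \<Rightarrow> int \<Rightarrow> heis" where
  "hpow x z = (if 0 \<le> z then (hmul x ^^ nat z) hone else (hmul (hinv x) ^^ nat (- z)) hone)"

definition hcomm :: "heis \<Rightarrow> heis \<Rightarrow> heis" where
  "hcomm x y = hmul (hmul (hmul (hinv x) (hinv y)) x) y"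

definition ha :: heis where "ha = (1, 0, 0)"
definition hb :: heis where "hb = (0, 1, 0)"
definition hc :: heis where "hc = hcomm hb ha"

definition pseudo_jensen :: "(heis \<Rightarrow> real) \<Rightarrow> bool" where
  "pseudo_jensen f \<longleftrightarrow>
     (\<exists>\<delta>>0. \<forall>x y. \<bar>f (hmul x y) + f (hmul x (hinv y)) - 2 * f x\<bar> \<le> \<delta>) \<and>
     (\<forall>x n. f (hpow x n) = real_of_int n * f x)"

lemma hc_eq: "hc = (0, 0, 1)"
  by (simp add: hc_def hcomm_def hmul_def hinv_def ha_def hb_def)

end

theory Submission
  imports Defs
begin

lemma iter_pow0:
  assumes "p * q = 0"
  shows "(hmul (p, q, r) ^^ n) hone = (int n * p, int n * q, int n * r)"
proof (induction n)
  case 0 then show ?case by (simp add: hone_def)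
next
  case (Suc n)
  have "q * (int n * p) = 0" using assms by (metis mult.left_commute mult_zero_right mult.commute)
  with Suc show ?case by (simp add: hmul_def algebra_simps)
qed

lemma hpow0:
  assumes "p * q = 0"
  shows "hpow (p, q, r) z = (z * p, z * q, z * r)"
proof (cases "0 \<le> z")
  case True then show ?thesis using iter_pow0[OF assms] by (simp add: hpow_def)
next
  case False
  have "hinv (p,q,r) = (-p,-q,-r)" using assms by (simp add: hinv_def mult.commute)
  moreover have "(-p)*(-q) = 0" using assms by simp
  ultimately show ?thesis using False iter_pow0[where p="-p" and q="-q" and r="-r" and n="nat (-z)"]
    by (simp add: hpow_def)
qed

lemma hpow2: "hpow (m, n, k) 2 = (2*m, 2*n, 2*k + n*m)"
  by (simp add: hpow_def numeral_2_eq_2 hmul_def hone_def)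

lemma hpow_m1: "hpow x (-1) = hinv x"
  by (cases x) (simp add: hpow_def hmul_def hone_def hinv_def)

theorem lemma3p8:
  fixes f :: "heis \<Rightarrow> real"
  assumes "pseudo_jensen f"
    and "f ha = 0" and "f hb = 0" and "f hc = 0"
  shows "\<forall>x. f x = 0"
proof -
  obtain d where d: "d > 0" and J: "\<And>x y. \<bar>f (hmul x y) + f (hmul x (hinv y)) - 2 * f x\<bar> \<le> d"
    using assms(1) unfolding pseudo_jensen_def by blast
  have H: "\<And>x n. f (hpow x n) = real_of_int n * f x"
    using assms(1) unfolding pseudo_jensen_def by blast
  have fc: "f (0,0,t) = 0" for t
    using H[of hc t] hpow0[of 0 0 1 t] assms(4) by (simp add: hc_eq)
  have fa: "f (t,0,0) = 0" for t
    using H[of ha t] hpow0[of 1 0 0 t] assms(2) by (simp add: ha_def)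
  have fb: "f (0,t,0) = 0" for t
    using H[of hb t] hpow0[of 0 1 0 t] assms(3) by (simp add: hb_def)
  have finv: "f (hinv x) = - f x" for x
    using H[of x "-1"] hpow_m1[of x] by simp
  have A: "\<bar>f (m,n,k) - f (m,n,k')\<bar> \<le> d/2" for m n k k'
  proof -
    have "\<bar>f (hmul (m,n,k') (m,n,2*k-k')) + f (hmul (m,n,k') (hinv (m,n,2*k-k'))) - 2 * f (m,n,k')\<bar> \<le> d"
      by (rule J)
    moreover have "hmul (m,n,k') (m,n,2*k-k') = hpow (m,n,k) 2"
      by (simp add: hpow2 hmul_def)
    moreover have "hmul (m,n,k') (hinv (m,n,2*k-k')) = (0,0,k'-(2*k-k'))"
      by (simp add: hmul_def hinv_def)
    ultimately have "\<bar>2 * f (m,n,k) - 2 * f (m,n,k')\<bar> \<le> d"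
      using H[of "(m,n,k)" 2] fc by simp
    then show ?thesis unfolding abs_le_iff by linarith
  qed
  have B: "\<bar>f (m,n,0) + f (m,-n,0)\<bar> \<le> d" for m n
  proof -
    have "\<bar>f (hmul (m,0,0) (0,n,0)) + f (hmul (m,0,0) (hinv (0,n,0))) - 2 * f (m,0,0)\<bar> \<le> d"
      by (rule J)
    then show ?thesis using fa by (simp add: hmul_def hinv_def)
  qed
  have C: "\<bar>f (m,n,n*m) - f (m,-n,0)\<bar> \<le> d" for m n
  proof -
    have "\<bar>f (hmul (0,n,0) (m,0,0)) + f (hmul (0,n,0) (hinv (m,0,0))) - 2 * f (0,n,0)\<bar> \<le> d"
      by (rule J)
    moreover have "hmul (0,n,0) (hinv (m,0,0)) = hinv (m,-n,0)"
      by (simp add: hmul_def hinv_def)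
    ultimately show ?thesis using fb finv by (simp add: hmul_def)
  qed
  have bound: "\<bar>f x\<bar> \<le> 2 * d" for x
  proof -
    obtain m n k where x: "x = (m,n,k)" by (cases x) auto
    have "\<bar>f (m,n,0)\<bar> \<le> 5/4 * d"
      using A[of m n "n*m" 0] B[of m n] C[of m n] unfolding abs_le_iff by linarith
    then show ?thesis using A[of m n k 0] unfolding x abs_le_iff by linarith
  qed
  show ?thesis
  proof
    fix x
    show "f x = 0"
    proof (rule ccontr)
      assume ne: "f x \<noteq> 0"
      obtain N :: nat where N: "2 * d / \<bar>f x\<bar> < real N" using reals_Archimedean2 by blast
      have "\<bar>real N * f x\<bar> \<le> 2 * d" using bound[of "hpow x (int N)"] H[of x "int N"] by simp
      moreover have "2 * d < real N * \<bar>f x\<bar>" using N ne by (simp add: field_simps)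
      ultimately show False by (simp add: abs_mult)
    qed
  qed
qed

end
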